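(* Let $\{P_\theta\}_{\theta\in\Theta}$ be a family of distributions on a space $\mathcal{X}$, with $\Theta$ equipped with a metric $d$. Let $T\in\mathbb{N}\cup\{\infty\}$, $\theta_0,\theta_1\in\Theta$, and let $X_1,X_2,\ldots$ be independent with $X_t\sim P_{\theta_0}$ for $t\le T$ and $X_t\sim P_{\theta_1}$ for $t>T$. Fix $\alpha\in(0,1)$ and suppose that for any $\theta\in\Theta$ we can construct level-$(1-\alpha)$ confidence sequences with pointwise width $w(\cdot,\theta,\alpha)$. Let $\tau$ be the stopping time of the BCS-Detector built from a nested forward confidence sequence $\{C_t\}_{t\ge1}$ and nested backward confidence sequences $\{B^{(n)}_t\}_{t\in[n]}$, $n\ge1$. Then: (i) If $T=\infty$, then $\mathbb{E}_\infty[\tau]\ge\frac{1}{2\alpha}-\frac32$. (ii) Suppose $T<\infty$ and the pre-change parameter $\theta_0$ is not known. Let $\mathcal{E}=\{\theta_0\in C_t \text{ for all } 1\le t<T\}$ (so that $\mathbb{P}_T(\mathcal{E})\ge1-\alpha$). Then for $\alpha\in(0,0.5)$, $$\mathbb{E}_T\big[(\tau-T)^+\,\big|\,\mathcal{E}\big]\le\frac{3\,u_0(\theta_0,\theta_1,T)}{1-\alpha},$$ where $u_0:=\min\{t\ge1:\ w(t,\theta_1,\alpha)+w(T,\theta_0,\alpha)<d(\theta_1,\theta_0)\}$.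
   Context: $\mathbb{P}_T,\mathbb{E}_T$ denote probability/expectation when the change occurs at time $T$; $\mathbb{P}_\infty,\mathbb{E}_\infty$ when there is no change. A level-$(1-\alpha)$ (forward) confidence sequence is a sequence of sets $C_t\subset\Theta$ with $C_t$ being $\sigma(X_1,\ldots,X_t)$-measurable and such that if the data are i.i.d. from $P_\theta$ then $\mathbb{P}(\forall t\ge1:\theta\in C_t)\ge1-\alpha$; it is nested if $C_t\subset C_s$ for $s<t$ (any CS can be made nested by replacing $C_t$ with $\cap_{s\le t}C_s$). For each $n\ge1$, a backward confidence sequence is a family $\{B^{(n)}_t\}_{1\le t\le n}$ of subsets of $\Theta$ with $B^{(n)}_t$ being $\sigma(X_t,\ldots,X_n)$-measurable and, if the data are i.i.d. from $P_\theta$, $\mathbb{P}(\forall t\in[n]:\theta\in B^{(n)}_t)\ge1-\alpha$; it is obtained by applying the forward construction to the reversed observations $Y_s=X_{n+1-s}$, $s\in[n]$, and re-indexing, and it is nested in the sense $B^{(n)}_s\subset B^{(n)}_{s'}$ for $s<s'$. A function $w(t,\theta,\alpha)$ is a pointwise width if for all $t$ and $\theta$, the set built from $t$ observations drawn i.i.d. from $P_\theta$ satisfies $\sup_{\theta'\in C_t}d(\theta,\theta')\le w(t,\theta,\alpha)$. The BCS-Detector stops at $\tau:=\inf\{n\ge1:\ C_n\cap B^{(n)}_1=\emptyset\}$. *)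

theory Defs
  imports "HOL-Probability.Probability"
begin

text \<open>Observations are indexed by t = 1, 2, ...; a data path is omega :: nat => 'x
  (the value at index 0 is irrelevant).  The change point T ranges over enat
  (T = \<infinity> means no change).\<close>

definition chlaw :: "('p \<Rightarrow> 'x measure) \<Rightarrow> 'p \<Rightarrow> 'p \<Rightarrow> enat \<Rightarrow> (nat \<Rightarrow> 'x) measure" where
  "chlaw P th0 th1 T = (\<Pi>\<^sub>M t\<in>UNIV. (if enat t \<le> T then P th0 else P th1))"

definition iidlaw :: "('p \<Rightarrow> 'x measure) \<Rightarrow> 'p \<Rightarrow> (nat \<Rightarrow> 'x) measure" where
  "iidlaw P th = (\<Pi>\<^sub>M t\<in>UNIV. P th)"

definition revseq :: "nat \<Rightarrow> (nat \<Rightarrow> 'x) \<Rightarrow> (nat \<Rightarrow> 'x)" where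
  "revseq n \<omega> = (\<lambda>s. if 1 \<le> s \<and> s \<le> n then \<omega> (n + 1 - s) else \<omega> s)"

text \<open>Backward confidence sequence B^(n)_t: the forward construction C applied to
  the reversed observations, re-indexed.\<close>
definition bwdcs :: "(nat \<Rightarrow> (nat \<Rightarrow> 'x) \<Rightarrow> 'p set) \<Rightarrow> nat \<Rightarrow> nat \<Rightarrow> (nat \<Rightarrow> 'x) \<Rightarrow> 'p set" where
  "bwdcs C n t \<omega> = C (n + 1 - t) (revseq n \<omega>)"

definition is_fwd_cs :: "('p \<Rightarrow> 'x measure) \<Rightarrow> real \<Rightarrow> (nat \<Rightarrow> (nat \<Rightarrow> 'x) \<Rightarrow> 'p set) \<Rightarrow> bool" where
  "is_fwd_cs P \<alpha> C \<longleftrightarrow>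
     (\<forall>t \<omega> \<omega>'. (\<forall>s\<in>{1..t}. \<omega> s = \<omega>' s) \<longrightarrow> C t \<omega> = C t \<omega>') \<and>
     (\<forall>th. measure (iidlaw P th) {\<omega>\<in>space (iidlaw P th). \<forall>t\<ge>1. th \<in> C t \<omega>} \<ge> 1 - \<alpha>)"

definition nested_cs :: "(nat \<Rightarrow> (nat \<Rightarrow> 'x) \<Rightarrow> 'p set) \<Rightarrow> bool" where
  "nested_cs C \<longleftrightarrow> (\<forall>\<omega> s t. 1 \<le> s \<longrightarrow> s < t \<longrightarrow> C t \<omega> \<subseteq> C s \<omega>)"

definition pointwise_width ::
  "('p::metric_space \<Rightarrow> 'x measure) \<Rightarrow> real \<Rightarrow> (nat \<Rightarrow> 'p \<Rightarrow> real \<Rightarrow> real) \<Rightarrow> (nat \<Rightarrow> (nat \<Rightarrow> 'x) \<Rightarrow> 'p set) \<Rightarrow> bool" where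
  "pointwise_width P \<alpha> w C \<longleftrightarrow>
     (\<forall>t th. 1 \<le> t \<longrightarrow> (AE \<omega> in iidlaw P th. \<forall>th'\<in>C t \<omega>. dist th th' \<le> w t th \<alpha>))"

definition bcs_tau :: "(nat \<Rightarrow> (nat \<Rightarrow> 'x) \<Rightarrow> 'p set) \<Rightarrow> (nat \<Rightarrow> 'x) \<Rightarrow> enat" where
  "bcs_tau C \<omega> = (if \<exists>n\<ge>1. C n \<omega> \<inter> bwdcs C n 1 \<omega> = {}
                    then enat (LEAST n. n \<ge> 1 \<and> C n \<omega> \<inter> bwdcs C n 1 \<omega> = {}) else \<infinity>)"

definition u0 :: "(nat \<Rightarrow> 'p::metric_space \<Rightarrow> real \<Rightarrow> real) \<Rightarrow> real \<Rightarrow> 'p \<Rightarrow> 'p \<Rightarrow> nat \<Rightarrow> enat" where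
  "u0 w \<alpha> th0 th1 T = (if \<exists>t\<ge>1. w t th1 \<alpha> + w T th0 \<alpha> < dist th1 th0
                        then enat (LEAST t. t \<ge> 1 \<and> w t th1 \<alpha> + w T th0 \<alpha> < dist th1 th0) else \<infinity>)"

end

theory Submission
  imports Defs
begin

lemma merge_meas:
  fixes M N :: "nat \<Rightarrow> 'x measure"
  assumes eqJ: "\<And>i. i \<in> J \<Longrightarrow> M i = N i"
  shows "(\<lambda>z. \<lambda>i. if i \<in> J then fst z i else snd z i) \<in> measurable (PiM UNIV M \<Otimes>\<^sub>M PiM UNIV N) (PiM UNIV N)"
    (is "?f \<in> measurable ?P ?N")
  proof (rule measurable_PiM_single')
    fix i :: nat
    show "(\<lambda>z. if i \<in> J then fst z i else snd z i) \<in> measurable ?P (N i)"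
    proof (cases "i \<in> J")
      case True
      then show ?thesis using eqJ[OF True, symmetric]
        by simp
    next
      case False
      then show ?thesis by simp
    qed
  next
    show "(\<lambda>z i. if i \<in> J then fst z i else snd z i) \<in> space ?P \<rightarrow> (\<Pi>\<^sub>E i\<in>UNIV. space (N i))"
      using eqJ by (auto simp: space_pair_measure space_PiM PiE_iff Pi_iff) metis
  qed

lemma merge_law:
  fixes M N :: "nat \<Rightarrow> 'x measure"
  assumes M: "\<And>i. prob_space (M i)" and N: "\<And>i. prob_space (N i)"
    and eqJ: "\<And>i. i \<in> J \<Longrightarrow> M i = N i"
  shows "distr (PiM UNIV M \<Otimes>\<^sub>M PiM UNIV N) (PiM UNIV N)
           (\<lambda>z. \<lambda>i. if i \<in> J then fst z i else snd z i) = PiM UNIV N"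
    (is "distr ?P ?N ?f = _")
proof -
  note meas = merge_meas[OF eqJ]
  interpret PM: prob_space "PiM UNIV M" by (rule prob_space_PiM) (rule M)
  interpret PN: prob_space "PiM UNIV N" by (rule prob_space_PiM) (rule N)
  interpret PP: pair_prob_space "PiM UNIV M" "PiM UNIV N" by unfold_locales
  show ?thesis
  proof (rule measure_eqI_PiM_infinite[symmetric, OF refl])
    show "finite_measure ?N" by unfold_locales
    show "sets (distr ?P ?N ?f) = sets ?N" by simp
    fix A and J' :: "nat set" assume J': "finite J'" "J' \<subseteq> UNIV" and A: "\<And>i. i \<in> J' \<Longrightarrow> A i \<in> sets (N i)"
    have AM: "i \<in> J' \<inter> J \<Longrightarrow> A i \<in> sets (M i)" for i using A eqJ by auto
    have "?f -` prod_emb UNIV N J' (Pi\<^sub>E J' A) \<inter> space ?P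
        = prod_emb UNIV M (J' \<inter> J) (Pi\<^sub>E (J' \<inter> J) A) \<times> prod_emb UNIV N (J' - J) (Pi\<^sub>E (J' - J) A)"
      using A[THEN sets.sets_into_space] eqJ
      by (auto simp: prod_emb_def space_pair_measure space_PiM PiE_iff Pi_iff split: if_splits) metis
    then have "distr ?P ?N ?f (prod_emb UNIV N J' (Pi\<^sub>E J' A))
        = emeasure ?P (prod_emb UNIV M (J' \<inter> J) (Pi\<^sub>E (J' \<inter> J) A) \<times> prod_emb UNIV N (J' - J) (Pi\<^sub>E (J' - J) A))"
      using J' A by (subst emeasure_distr[OF meas]) (auto intro!: sets_PiM_I)
    also have "\<dots> = emeasure (PiM UNIV M) (prod_emb UNIV M (J' \<inter> J) (Pi\<^sub>E (J' \<inter> J) A))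
                  * emeasure (PiM UNIV N) (prod_emb UNIV N (J' - J) (Pi\<^sub>E (J' - J) A))"
      using J' A AM by (intro PN.emeasure_pair_measure_Times sets_PiM_I) auto
    also have "\<dots> = (\<Prod>i\<in>J' \<inter> J. emeasure (M i) (A i)) * (\<Prod>i\<in>J' - J. emeasure (N i) (A i))"
      proof -
      have 1: "emeasure (PiM UNIV M) (prod_emb UNIV M (J' \<inter> J) (Pi\<^sub>E (J' \<inter> J) A)) = (\<Prod>i\<in>J' \<inter> J. emeasure (M i) (A i))"
        by (rule emeasure_PiM_emb) (use J' AM M in auto)
      have 2: "emeasure (PiM UNIV N) (prod_emb UNIV N (J' - J) (Pi\<^sub>E (J' - J) A)) = (\<Prod>i\<in>J' - J. emeasure (N i) (A i))"
        by (rule emeasure_PiM_emb) (use J' A N in auto)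
      show ?thesis by (simp only: 1 2)
    qed
    also have "\<dots> = (\<Prod>i\<in>J'. emeasure (N i) (A i))"
      using J' eqJ by (simp add: prod.Int_Diff[of J' _ J])
    also have "\<dots> = emeasure ?N (prod_emb UNIV N J' (Pi\<^sub>E J' A))"
      using J' A N by (simp add: emeasure_PiM_emb)
    finally show "emeasure ?N (prod_emb UNIV N J' (Pi\<^sub>E J' A)) = emeasure (distr ?P ?N ?f) (prod_emb UNIV N J' (Pi\<^sub>E J' A))"
      by simp
  qed
qed

lemma AE_transfer:
  fixes M N :: "nat \<Rightarrow> 'x measure"
  assumes M: "\<And>i. prob_space (M i)" and N: "\<And>i. prob_space (N i)"
    and eqJ: "\<And>i. i \<in> J \<Longrightarrow> M i = N i"
    and dep: "\<And>\<omega> \<omega>'. (\<forall>i\<in>J. \<omega> i = \<omega>' i) \<Longrightarrow> Q \<omega> = Q \<omega>'"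
    and AE: "AE \<omega> in PiM UNIV N. Q \<omega>"
  shows "AE \<omega> in PiM UNIV M. Q \<omega>"
proof -
  interpret PM: prob_space "PiM UNIV M" by (rule prob_space_PiM) (rule M)
  interpret PN: prob_space "PiM UNIV N" by (rule prob_space_PiM) (rule N)
  interpret PP: pair_prob_space "PiM UNIV M" "PiM UNIV N" by unfold_locales
  let ?f = "\<lambda>z. \<lambda>i. if i \<in> J then fst z i else snd z i"
  have D: "distr (PiM UNIV M \<Otimes>\<^sub>M PiM UNIV N) (PiM UNIV N) ?f = PiM UNIV N"
    by (rule merge_law[OF M N]) (rule eqJ)
  have "AE z in PiM UNIV M \<Otimes>\<^sub>M PiM UNIV N. Q (?f z)"
    apply (rule AE_distrD[OF merge_meas[OF eqJ]])
    unfolding D using AE by auto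
  then have "AE z in PiM UNIV M \<Otimes>\<^sub>M PiM UNIV N. Q (fst z)"
    by (rule eventually_mono) (subst dep[of _ "?f _"], auto)
  then have "AE x in PiM UNIV M. AE y in PiM UNIV N. Q (fst (x, y))"
    by (rule PP.AE_pair)
  then show ?thesis by simp
qed

definition rv :: "nat \<Rightarrow> nat \<Rightarrow> nat" where
  "rv n s = (if 1 \<le> s \<and> s \<le> n then n + 1 - s else s)"

lemma revseq_rv: "revseq n \<omega> = (\<lambda>s\<in>UNIV. \<omega> (rv n s))"
  by (auto simp: revseq_def rv_def fun_eq_iff)

lemma inj_rv: "inj (rv n)"
  unfolding inj_on_def rv_def by auto

lemma revseq_fun: "revseq n = (\<lambda>\<omega>. \<lambda>s\<in>UNIV. \<omega> (rv n s))"
  by (rule ext, rule revseq_rv)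

lemma revseq_meas: "revseq n \<in> measurable (PiM UNIV M) (PiM UNIV (\<lambda>i. M (rv n i)))"
  unfolding revseq_fun by (intro measurable_restrict measurable_component_singleton) auto

lemma revseq_distr:
  assumes "\<And>i. prob_space (M i)"
  shows "distr (PiM UNIV M) (PiM UNIV (\<lambda>i. M (rv n i))) (revseq n) = PiM UNIV (\<lambda>i. M (rv n i))"
  unfolding revseq_fun by (rule distr_PiM_reindex) (use assms inj_rv in auto)

lemma sum_min_count: "(\<Sum>n<K. (if n < k then 1 else 0) :: ennreal) = of_nat (min K k)"
  by (induction K) (auto simp: min_def)

lemma sum_lin: "(\<Sum>n<K. (1 - (real n + 1) * a)) = real K - a * real K * (real K + 1) / 2"
  by (induction K) (auto simp: algebra_simps add_divide_distrib)

lemma real_bound: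
  fixes a :: real assumes "0 < a" "a < 1"
  shows "1 / (2 * a) - 3 / 2 \<le> real (nat \<lfloor>1 / a\<rfloor>) - a * real (nat \<lfloor>1 / a\<rfloor>) * (real (nat \<lfloor>1 / a\<rfloor>) + 1) / 2"
proof -
  define x where "x = 1 / a"
  define K where "K = real (nat \<lfloor>x\<rfloor>)"
  have x1: "x > 1" using assms by (simp add: x_def)
  have K1: "K \<le> x" "x - 1 < K" using x1 unfolding K_def by linarith+
  have a: "a = 1 / x" using assms by (simp add: x_def)
  have "(x - K) * (1 - (x - K)) \<ge> 0" using K1 by (intro mult_nonneg_nonneg) auto
  then have "2 * x * K - K * K - K - x * x + x \<ge> 0" by (simp add: algebra_simps)
  then have "x / 2 - 3 / 2 \<le> K - K * (K + 1) / (2 * x)" using x1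
    by (simp add: field_simps)
  then show ?thesis using x1 by (simp add: a x_def[symmetric] K_def[symmetric] field_simps)
qed

theorem theorem1:
  fixes P :: "'p::metric_space \<Rightarrow> 'x measure"
    and X :: "'x measure"
    and C :: "nat \<Rightarrow> (nat \<Rightarrow> 'x) \<Rightarrow> 'p set"
    and w :: "nat \<Rightarrow> 'p \<Rightarrow> real \<Rightarrow> real"
    and \<alpha> :: real and th0 th1 :: 'p
  assumes probs: "\<And>th. prob_space (P th)"
    and sets_P: "\<And>th. sets (P th) = sets X"
    and alpha: "0 < \<alpha>" "\<alpha> < 1"
    and fwd: "is_fwd_cs P \<alpha> C"
    and nested: "nested_cs C"
    and width: "pointwise_width P \<alpha> w C"
    and meas_C: "\<And>t th. {\<omega>\<in>space (\<Pi>\<^sub>M t\<in>UNIV. X). th \<in> C t \<omega>} \<in> sets (\<Pi>\<^sub>M t\<in>UNIV. X)"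
    and meas_stop: "\<And>n. {\<omega>\<in>space (\<Pi>\<^sub>M t\<in>UNIV. X). C n \<omega> \<inter> bwdcs C n 1 \<omega> = {}}
                          \<in> sets (\<Pi>\<^sub>M t\<in>UNIV. X)"
  shows "ennreal (1 / (2 * \<alpha>) - 3 / 2)
           \<le> (\<integral>\<^sup>+ \<omega>. ennreal_of_enat (bcs_tau C \<omega>) \<partial>chlaw P th0 th1 \<infinity>)
         \<and> (\<forall>T::nat. 1 \<le> T \<longrightarrow> \<alpha> < 1 / 2 \<longrightarrow>
           (let E = {\<omega>\<in>space (chlaw P th0 th1 (enat T)). \<forall>t. 1 \<le> t \<and> t < T \<longrightarrow> th0 \<in> C t \<omega>}
            in (\<integral>\<^sup>+ \<omega>. ennreal_of_enat (bcs_tau C \<omega> - enat T) * indicator E \<omega> \<partial>chlaw P th0 th1 (enat T))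
                 / emeasure (chlaw P th0 th1 (enat T)) E
               \<le> 3 * ennreal_of_enat (u0 w \<alpha> th0 th1 T) / ennreal (1 - \<alpha>)))"
proof -
  define Mc where "Mc T = (\<lambda>t. if enat t \<le> T then P th0 else P th1)" for T
  have chlaw_eq: "chlaw P th0 th1 T = PiM UNIV (Mc T)" for T by (simp add: chlaw_def Mc_def)
  have Mc_prob: "prob_space (Mc T t)" for T t by (simp add: Mc_def probs)
  have Mc_sets: "sets (Mc T t) = sets X" for T t by (simp add: Mc_def sets_P)
  have sets_eq: "sets (PiM UNIV M) = sets (PiM UNIV (\<lambda>_. X))" if "\<And>i. sets (M i) = sets X"
    for M :: "nat \<Rightarrow> 'x measure"
    by (rule sets_PiM_cong) (auto simp: that)
  have space_eq: "space (PiM UNIV M) = space (PiM UNIV (\<lambda>_. X))" if "\<And>i. sets (M i) = sets X"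
    for M :: "nat \<Rightarrow> 'x measure"
    by (rule sets_eq_imp_space_eq) (rule sets_eq[OF that])
  have mC: "{\<omega>\<in>space (PiM UNIV M). th \<in> C t \<omega>} \<in> sets (PiM UNIV M)" if "\<And>i. sets (M i) = sets X"
    for M :: "nat \<Rightarrow> 'x measure" and th t
    using meas_C[of th t] sets_eq[OF that] space_eq[OF that] by simp
  have mS: "{\<omega>\<in>space (PiM UNIV M). C n \<omega> \<inter> bwdcs C n 1 \<omega> = {}} \<in> sets (PiM UNIV M)" if "\<And>i. sets (M i) = sets X"
    for M :: "nat \<Rightarrow> 'x measure" and n
    using meas_stop[of n] sets_eq[OF that] space_eq[OF that] by simp
  have fwd_dep: "C t \<omega> = C t \<omega>'" if "\<forall>s\<in>{1..t}. \<omega> s = \<omega>' s" for t \<omega> \<omega>'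
    using fwd that unfolding is_fwd_cs_def by blast
  have fwd_cov: "measure (PiM UNIV (\<lambda>_. P th)) {\<omega>\<in>space (PiM UNIV (\<lambda>_. P th)). \<forall>t\<ge>1. th \<in> C t \<omega>} \<ge> 1 - \<alpha>" for th
    using fwd unfolding is_fwd_cs_def iidlaw_def by blast
  have width': "AE \<omega> in PiM UNIV (\<lambda>_. P th). \<forall>th'\<in>C t \<omega>. dist th th' \<le> w t th \<alpha>" if "1 \<le> t" for t th
    using width that unfolding pointwise_width_def iidlaw_def by blast
  have bw: "bwdcs C n 1 \<omega> = C n (revseq n \<omega>)" for n \<omega> by (simp add: bwdcs_def)
  have nestedD: "C t \<omega> \<subseteq> C s \<omega>" if "1 \<le> s" "s < t" for \<omega> s t
    by (rule nested[unfolded nested_cs_def, rule_format, OF that])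
  show ?thesis
  proof
    show "ennreal (1 / (2 * \<alpha>) - 3 / 2) \<le> (\<integral>\<^sup>+ \<omega>. ennreal_of_enat (bcs_tau C \<omega>) \<partial>chlaw P th0 th1 \<infinity>)"
      proof -
      define Pn where "Pn = PiM UNIV (\<lambda>_::nat. P th0)"
      interpret Pn: prob_space Pn unfolding Pn_def by (rule prob_space_PiM) (rule probs)
      have ch: "chlaw P th0 th1 \<infinity> = Pn" unfolding chlaw_def Pn_def by (rule PiM_cong) auto
      have Pn_sets: "sets ((\<lambda>_::nat. P th0) i) = sets X" for i by (simp add: sets_P)
      note mCn = mC[OF Pn_sets, folded Pn_def] and mSn = mS[OF Pn_sets, folded Pn_def]
      define A where "A = {\<omega>\<in>space Pn. \<forall>t. 1 \<le> t \<longrightarrow> th0 \<in> C t \<omega>}"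
      have A_meas: "A \<in> sets Pn" unfolding A_def
      proof (rule sets.sets_Collect_countable_All)
        fix t :: nat
        show "{\<omega>\<in>space Pn. 1 \<le> t \<longrightarrow> th0 \<in> C t \<omega>} \<in> sets Pn"
          by (cases "1 \<le> t") (simp_all add: mCn)
      qed
      have fwd0: "measure Pn {\<omega>\<in>space Pn. \<forall>t\<ge>1. th0 \<in> C t \<omega>} \<ge> 1 - \<alpha>"
        unfolding Pn_def by (rule fwd_cov)
      have A_prob: "measure Pn A \<ge> 1 - \<alpha>" unfolding A_def by (rule fwd0)
      have compA: "measure Pn (space Pn - A) \<le> \<alpha>" using Pn.prob_compl[OF A_meas] A_prob by simp
      define R where "R m = {\<omega>\<in>space Pn. th0 \<notin> C m (revseq m \<omega>)}" for m
      have rd: "distr Pn Pn (revseq m) = Pn" for m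
        unfolding Pn_def by (rule revseq_distr) (rule probs)
      have rm: "revseq m \<in> measurable Pn Pn" for m
        unfolding Pn_def by (rule revseq_meas)
      have rs: "revseq m \<omega> \<in> space Pn" if "\<omega> \<in> space Pn" for \<omega> m
        using measurable_space[OF rm that] .
      have B: "space Pn - {\<omega>\<in>space Pn. th0 \<in> C m \<omega>} \<in> sets Pn" for m
        using mCn[of th0 m] by (intro sets.Diff sets.top)
      have R_eq: "R m = revseq m -` (space Pn - {\<omega>\<in>space Pn. th0 \<in> C m \<omega>}) \<inter> space Pn" for m
        unfolding R_def using rs by blast
      have R_meas: "R m \<in> sets Pn" for m
        unfolding R_eq by (rule measurable_sets[OF rm B])
      have R_le: "measure Pn (R m) \<le> \<alpha>" if "1 \<le> m" for m
      proof -
        have "measure Pn (R m) = measure (distr Pn Pn (revseq m)) (space Pn - {\<omega>\<in>space Pn. th0 \<in> C m \<omega>})"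
          unfolding R_eq by (rule measure_distr[OF rm B, symmetric])
        also have "\<dots> = measure Pn (space Pn - {\<omega>\<in>space Pn. th0 \<in> C m \<omega>})" unfolding rd ..
        also have "\<dots> \<le> measure Pn (space Pn - A)"
        proof (rule Pn.finite_measure_mono)
          show "space Pn - {\<omega>\<in>space Pn. th0 \<in> C m \<omega>} \<subseteq> space Pn - A"
            using that unfolding A_def by blast
          show "space Pn - A \<in> sets Pn" using A_meas by (intro sets.Diff sets.top)
        qed
        finally show ?thesis using compA by linarith
      qed
      define S where "S m = {\<omega>\<in>space Pn. C m \<omega> \<inter> bwdcs C m 1 \<omega> = {}}" for m
      define U where "U n = (\<Union>m\<in>{1..n}. S m)" for n
      have U_meas: "U n \<in> sets Pn" for n unfolding U_def S_def by (intro sets.finite_UN finite_atLeastAtMost mSn)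
      have U_sub: "U n \<subseteq> (space Pn - A) \<union> (\<Union>m\<in>{1..n}. R m)" for n
      proof
        fix \<omega> assume "\<omega> \<in> U n"
        then obtain m where m: "m \<in> {1..n}" "\<omega> \<in> S m" unfolding U_def by blast
        then have sp: "\<omega> \<in> space Pn" and dis: "C m \<omega> \<inter> C m (revseq m \<omega>) = {}"
          unfolding S_def bw by auto
        show "\<omega> \<in> (space Pn - A) \<union> (\<Union>m\<in>{1..n}. R m)"
        proof (cases "\<omega> \<in> A")
          case True
          then have "th0 \<in> C m \<omega>" using m(1) unfolding A_def by auto
          then have "th0 \<notin> C m (revseq m \<omega>)" using dis by blast
          then have "\<omega> \<in> R m" using sp unfolding R_def by blast
          then show ?thesis using m(1) by blast
        next
          case False
          then show ?thesis using sp by blast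
        qed
      qed
      have U_le: "measure Pn (U n) \<le> \<alpha> + real n * \<alpha>" for n
      proof -
        have RU: "(\<Union>m\<in>{1..n}. R m) \<in> sets Pn" using R_meas by (intro sets.finite_UN) auto
        have cA: "space Pn - A \<in> sets Pn" using A_meas by (intro sets.Diff sets.top)
        have h1: "measure Pn (U n) \<le> measure Pn ((space Pn - A) \<union> (\<Union>m\<in>{1..n}. R m))"
          using U_sub cA RU by (intro Pn.finite_measure_mono sets.Un) auto
        have h2: "measure Pn ((space Pn - A) \<union> (\<Union>m\<in>{1..n}. R m)) \<le> measure Pn (space Pn - A) + measure Pn (\<Union>m\<in>{1..n}. R m)"
          using cA RU by (rule measure_Un_le)
        have h3: "measure Pn (\<Union>m\<in>{1..n}. R m) \<le> (\<Sum>m\<in>{1..n}. measure Pn (R m))"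
          using R_meas by (intro Pn.finite_measure_subadditive_finite) auto
        have h4: "(\<Sum>m\<in>{1..n}. measure Pn (R m)) \<le> of_nat (card {1..n}) * \<alpha>"
          using R_le by (intro sum_bounded_above) auto
        have "card {1..n} = n" by simp
        with h4 have h4': "(\<Sum>m\<in>{1..n}. measure Pn (R m)) \<le> real n * \<alpha>" by simp
        show ?thesis using h1 h2 h3 h4' compA by linarith
      qed
      have tail: "emeasure Pn (space Pn - U n) \<ge> ennreal (1 - (real n + 1) * \<alpha>)" for n
      proof -
        have "emeasure Pn (space Pn - U n) = ennreal (1 - measure Pn (U n))"
          using Pn.prob_compl[OF U_meas] U_meas by (simp add: Pn.emeasure_eq_measure)
        then show ?thesis using U_le[of n] by (simp only:) (intro ennreal_leI, simp add: algebra_simps)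
      qed
      define K where "K = nat \<lfloor>1 / \<alpha>\<rfloor>"
      have pw: "(\<Sum>n<K. indicator (space Pn - U n) \<omega>) \<le> ennreal_of_enat (bcs_tau C \<omega>)"
        if "\<omega> \<in> space Pn" for \<omega>
      proof (cases "\<exists>n\<ge>1. C n \<omega> \<inter> bwdcs C n 1 \<omega> = {}")
        case True
        define k where "k = (LEAST n. n \<ge> 1 \<and> C n \<omega> \<inter> bwdcs C n 1 \<omega> = {})"
        have ex: "\<exists>n. n \<ge> 1 \<and> C n \<omega> \<inter> bwdcs C n 1 \<omega> = {}" using True by blast
        have k: "k \<ge> 1 \<and> C k \<omega> \<inter> bwdcs C k 1 \<omega> = {}"
          unfolding k_def by (rule LeastI_ex[OF ex])
        have tk: "bcs_tau C \<omega> = enat k" using True by (simp add: bcs_tau_def k_def)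
        have "indicator (space Pn - U n) \<omega> \<le> (if n < k then 1 else 0 :: ennreal)" for n
        proof (cases "n < k")
          case False
          then have kn: "k \<in> {1..n}" using k by simp
          have "\<omega> \<in> S k" using k that unfolding S_def by simp
          then have "\<omega> \<in> U n" unfolding U_def using kn by blast
          then show ?thesis by simp
        qed (simp add: indicator_def)
        then have "(\<Sum>n<K. indicator (space Pn - U n) \<omega>) \<le> (\<Sum>n<K. (if n < k then 1 else 0 :: ennreal))"
          by (intro sum_mono) auto
        also have "\<dots> = of_nat (min K k)" by (rule sum_min_count)
        also have "\<dots> \<le> of_nat k" by simp
        finally show ?thesis by (simp add: tk)
      next
        case False
        then have "bcs_tau C \<omega> = \<infinity>" unfolding bcs_tau_def by (rule if_not_P)
        then show ?thesis by simp
      qed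
      have nonneg: "0 \<le> 1 - (real n + 1) * \<alpha>" if "n \<in> {..<K}" for n
      proof -
        from that have "real n + 1 \<le> real K" by simp
        also have "real K \<le> 1 / \<alpha>"
        proof -
          have "1 < 1 / \<alpha>" using alpha by (simp add: field_simps)
          then show ?thesis unfolding K_def by linarith
        qed
        finally show "0 \<le> 1 - (real n + 1) * \<alpha>" using alpha by (simp add: field_simps)
      qed
      have "ennreal (1 / (2 * \<alpha>) - 3 / 2) \<le> ennreal (\<Sum>n<K. (1 - (real n + 1) * \<alpha>))"
        using real_bound[OF alpha] unfolding sum_lin K_def by (rule ennreal_leI)
      also have "\<dots> = (\<Sum>n<K. ennreal (1 - (real n + 1) * \<alpha>))"
        by (rule sum_ennreal[symmetric]) (rule nonneg)
      also have "\<dots> \<le> (\<Sum>n<K. emeasure Pn (space Pn - U n))"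
        by (intro sum_mono tail)
      also have "\<dots> = (\<integral>\<^sup>+ \<omega>. (\<Sum>n<K. indicator (space Pn - U n) \<omega>) \<partial>Pn)"
      proof -
        have "(\<integral>\<^sup>+ \<omega>. (\<Sum>n<K. indicator (space Pn - U n) \<omega>) \<partial>Pn) = (\<Sum>n<K. (\<integral>\<^sup>+ \<omega>. indicator (space Pn - U n) \<omega> \<partial>Pn))"
          by (rule nn_integral_sum) (use U_meas in auto)
        also have "\<dots> = (\<Sum>n<K. emeasure Pn (space Pn - U n))"
          by (intro sum.cong refl nn_integral_indicator) (use U_meas in auto)
        finally show ?thesis by simp
      qed
      also have "\<dots> \<le> (\<integral>\<^sup>+ \<omega>. ennreal_of_enat (bcs_tau C \<omega>) \<partial>Pn)"
        by (rule nn_integral_mono) (rule pw)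
      finally show ?thesis unfolding ch .
    qed
  next
    show "\<forall>T::nat. 1 \<le> T \<longrightarrow> \<alpha> < 1 / 2 \<longrightarrow>
           (let E = {\<omega>\<in>space (chlaw P th0 th1 (enat T)). \<forall>t. 1 \<le> t \<and> t < T \<longrightarrow> th0 \<in> C t \<omega>}
            in (\<integral>\<^sup>+ \<omega>. ennreal_of_enat (bcs_tau C \<omega> - enat T) * indicator E \<omega> \<partial>chlaw P th0 th1 (enat T))
                 / emeasure (chlaw P th0 th1 (enat T)) E
               \<le> 3 * ennreal_of_enat (u0 w \<alpha> th0 th1 T) / ennreal (1 - \<alpha>))"
    proof (intro allI impI)
      fix T :: nat assume T1: "1 \<le> T" and ahalf: "\<alpha> < 1 / 2"
      define L where "L = chlaw P th0 th1 (enat T)"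
      have L_eq: "L = PiM UNIV (Mc (enat T))" unfolding L_def by (rule chlaw_eq)
      interpret L: prob_space L unfolding L_eq by (rule prob_space_PiM) (rule Mc_prob)
      define E where "E = {\<omega>\<in>space L. \<forall>t. 1 \<le> t \<and> t < T \<longrightarrow> th0 \<in> C t \<omega>}"
      have mCL: "{\<omega>\<in>space L. th \<in> C t \<omega>} \<in> sets L" for th t
        unfolding L_eq by (rule mC) (rule Mc_sets)
      have E_meas: "E \<in> sets L" unfolding E_def
      proof (rule sets.sets_Collect_countable_All)
        fix t :: nat
        show "{\<omega>\<in>space L. 1 \<le> t \<and> t < T \<longrightarrow> th0 \<in> C t \<omega>} \<in> sets L"
        proof (cases "1 \<le> t \<and> t < T")
          case True
          then have "{\<omega>\<in>space L. 1 \<le> t \<and> t < T \<longrightarrow> th0 \<in> C t \<omega>} = {\<omega>\<in>space L. th0 \<in> C t \<omega>}"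
            by blast
          then show ?thesis using mCL[of th0 t] by (simp only:)
        next
          case False
          then have "{\<omega>\<in>space L. 1 \<le> t \<and> t < T \<longrightarrow> th0 \<in> C t \<omega>} = space L"
            by blast
          then show ?thesis by (simp only: sets.top)
        qed
      qed
      have goal: "(\<integral>\<^sup>+ \<omega>. ennreal_of_enat (bcs_tau C \<omega> - enat T) * indicator E \<omega> \<partial>L) / emeasure L E
          \<le> 3 * ennreal_of_enat (u0 w \<alpha> th0 th1 T) / ennreal (1 - \<alpha>)"
      proof (cases "\<exists>t\<ge>1. w t th1 \<alpha> + w T th0 \<alpha> < dist th1 th0")
        case False
        then have "u0 w \<alpha> th0 th1 T = \<infinity>" unfolding u0_def by (rule if_not_P)
        then have "ennreal_of_enat (u0 w \<alpha> th0 th1 T) = top" by simp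
        then have "3 * ennreal_of_enat (u0 w \<alpha> th0 th1 T) / ennreal (1 - \<alpha>) = top"
          by (simp add: ennreal_mult_top ennreal_top_divide)
        then show ?thesis by (simp only: top_greatest)
      next
        case True
        define u where "u = (LEAST t. t \<ge> 1 \<and> w t th1 \<alpha> + w T th0 \<alpha> < dist th1 th0)"
        have ex: "\<exists>t. t \<ge> 1 \<and> w t th1 \<alpha> + w T th0 \<alpha> < dist th1 th0" using True by blast
        have u: "u \<ge> 1 \<and> w u th1 \<alpha> + w T th0 \<alpha> < dist th1 th0"
          unfolding u_def by (rule LeastI_ex[OF ex])
        have u0u: "u0 w \<alpha> th0 th1 T = enat u" unfolding u0_def u_def using True by (rule if_P)
        define n0 where "n0 = T + u"
        have a: "AE \<omega> in L. \<forall>th'\<in>C T \<omega>. dist th0 th' \<le> w T th0 \<alpha>"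
          unfolding L_eq
        proof (rule AE_transfer[where N="\<lambda>_. P th0" and J="{1..T}"])
          show "prob_space (Mc (enat T) i)" for i by (rule Mc_prob)
          show "prob_space (P th0)" by (rule probs)
          show "Mc (enat T) i = P th0" if "i \<in> {1..T}" for i using that by (simp add: Mc_def)
          show "(\<forall>th'\<in>C T \<omega>. dist th0 th' \<le> w T th0 \<alpha>) = (\<forall>th'\<in>C T \<omega>'. dist th0 th' \<le> w T th0 \<alpha>)"
            if "\<forall>i\<in>{1..T}. \<omega> i = \<omega>' i" for \<omega> \<omega>' using fwd_dep[OF that] by simp
          show "AE \<omega> in PiM UNIV (\<lambda>_. P th0). \<forall>th'\<in>C T \<omega>. dist th0 th' \<le> w T th0 \<alpha>"
            by (rule width'[OF T1])
        qed
        define Mr where "Mr = (\<lambda>i. Mc (enat T) (rv n0 i))"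
        have b0: "AE \<omega> in PiM UNIV Mr. \<forall>th'\<in>C u \<omega>. dist th1 th' \<le> w u th1 \<alpha>"
        proof (rule AE_transfer[where N="\<lambda>_. P th1" and J="{1..u}"])
          show "prob_space (Mr i)" for i unfolding Mr_def by (rule Mc_prob)
          show "prob_space (P th1)" by (rule probs)
          show "Mr i = P th1" if "i \<in> {1..u}" for i
          proof -
            have "rv n0 i = n0 + 1 - i" using that unfolding rv_def n0_def by auto
            moreover have "\<not> (n0 + 1 - i \<le> T)" using that unfolding n0_def by auto
            ultimately show ?thesis unfolding Mr_def Mc_def by simp
          qed
          show "(\<forall>th'\<in>C u \<omega>. dist th1 th' \<le> w u th1 \<alpha>) = (\<forall>th'\<in>C u \<omega>'. dist th1 th' \<le> w u th1 \<alpha>)"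
            if "\<forall>i\<in>{1..u}. \<omega> i = \<omega>' i" for \<omega> \<omega>' using fwd_dep[OF that] by simp
          show "AE \<omega> in PiM UNIV (\<lambda>_. P th1). \<forall>th'\<in>C u \<omega>. dist th1 th' \<le> w u th1 \<alpha>"
            using u by (intro width') auto
        qed
        have b: "AE \<omega> in L. \<forall>th'\<in>C u (revseq n0 \<omega>). dist th1 th' \<le> w u th1 \<alpha>"
          unfolding L_eq
        proof (rule AE_distrD[OF revseq_meas[of n0 "Mc (enat T)"]])
          show "AE \<omega> in distr (PiM UNIV (Mc (enat T))) (PiM UNIV (\<lambda>i. Mc (enat T) (rv n0 i))) (revseq n0).
                  \<forall>th'\<in>C u \<omega>. dist th1 th' \<le> w u th1 \<alpha>"
          proof -
            have rdL: "distr (PiM UNIV (Mc (enat T))) (PiM UNIV (\<lambda>i. Mc (enat T) (rv n0 i))) (revseq n0)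
                = PiM UNIV (\<lambda>i. Mc (enat T) (rv n0 i))" by (rule revseq_distr) (rule Mc_prob)
            show ?thesis unfolding rdL using b0 unfolding Mr_def .
          qed
        qed
        have tau: "AE \<omega> in L. bcs_tau C \<omega> \<le> enat n0"
          using a b
        proof eventually_elim
          case (elim \<omega>)
          have disj: "C n0 \<omega> \<inter> bwdcs C n0 1 \<omega> = {}"
          proof (rule ccontr)
            assume "C n0 \<omega> \<inter> bwdcs C n0 1 \<omega> \<noteq> {}"
            then obtain th' where t1: "th' \<in> C n0 \<omega>" and t2: "th' \<in> C n0 (revseq n0 \<omega>)"
              unfolding bw by blast
            have "C n0 \<omega> \<subseteq> C T \<omega>" by (rule nestedD) (use T1 u in \<open>simp_all add: n0_def\<close>)
            with t1 elim(1) have d0: "dist th0 th' \<le> w T th0 \<alpha>" by blast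
            have "C n0 (revseq n0 \<omega>) \<subseteq> C u (revseq n0 \<omega>)" by (rule nestedD) (use T1 u in \<open>simp_all add: n0_def\<close>)
            with t2 elim(2) have d1: "dist th1 th' \<le> w u th1 \<alpha>" by blast
            have "dist th1 th0 \<le> dist th1 th' + dist th' th0" by (rule dist_triangle)
            moreover have "dist th' th0 = dist th0 th'" by (rule dist_commute)
            ultimately show False using d0 d1 u by linarith
          qed
          have n01: "n0 \<ge> 1" using T1 unfolding n0_def by simp
          have ex2: "\<exists>n\<ge>1. C n \<omega> \<inter> bwdcs C n 1 \<omega> = {}" using disj n01 by blast
          have "bcs_tau C \<omega> = enat (LEAST n. n \<ge> 1 \<and> C n \<omega> \<inter> bwdcs C n 1 \<omega> = {})"
            unfolding bcs_tau_def using ex2 by (rule if_P)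
          moreover have "(LEAST n. n \<ge> 1 \<and> C n \<omega> \<inter> bwdcs C n 1 \<omega> = {}) \<le> n0"
            by (rule Least_le) (use disj n01 in blast)
          ultimately show ?case by simp
        qed
        have pt: "ennreal_of_enat (x - enat T) \<le> of_nat u" if "x \<le> enat n0" for x
        proof (cases x)
          case (enat k)
          with that have "k \<le> T + u" unfolding n0_def by simp
          then have "k - T \<le> u" by simp
          then show ?thesis using enat by simp
        next
          case infinity
          with that show ?thesis by simp
        qed
        have int_le: "(\<integral>\<^sup>+ \<omega>. ennreal_of_enat (bcs_tau C \<omega> - enat T) * indicator E \<omega> \<partial>L)
            \<le> (\<integral>\<^sup>+ \<omega>. of_nat u * indicator E \<omega> \<partial>L)"
          using tau
        proof (rule nn_integral_mono_AE[OF eventually_mono])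
          fix \<omega> assume "bcs_tau C \<omega> \<le> enat n0"
          then show "ennreal_of_enat (bcs_tau C \<omega> - enat T) * indicator E \<omega> \<le> of_nat u * indicator E \<omega>"
            using pt by (intro mult_right_mono) auto
        qed
        have int_eq: "(\<integral>\<^sup>+ \<omega>. of_nat u * indicator E \<omega> \<partial>L) = of_nat u * emeasure L E"
          by (rule nn_integral_cmult_indicator[OF E_meas])
        have ratio: "(of_nat u * emeasure L E) / emeasure L E \<le> (of_nat u :: ennreal)"
        proof (cases "emeasure L E = 0")
          case True then show ?thesis by simp
        next
          case False
          have "emeasure L E \<noteq> top" by simp
          with False show ?thesis by (simp add: ennreal_mult_divide_eq)
        qed
        have fin: "(of_nat u :: ennreal) \<le> 3 * ennreal_of_enat (u0 w \<alpha> th0 th1 T) / ennreal (1 - \<alpha>)"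
        proof -
          have e1: "3 * ennreal_of_enat (u0 w \<alpha> th0 th1 T) = ennreal (3 * real u)"
            unfolding u0u by (simp add: ennreal_mult ennreal_of_nat_eq_real_of_nat)
          have e2: "ennreal (3 * real u) / ennreal (1 - \<alpha>) = ennreal (3 * real u / (1 - \<alpha>))"
            by (rule divide_ennreal) (use alpha in auto)
          have "real u \<le> 3 * real u / (1 - \<alpha>)" using alpha by (simp add: field_simps)
          then have "ennreal (real u) \<le> ennreal (3 * real u / (1 - \<alpha>))" by (rule ennreal_leI)
          then show ?thesis unfolding e1 e2 by (simp add: ennreal_of_nat_eq_real_of_nat)
        qed
        have "(\<integral>\<^sup>+ \<omega>. ennreal_of_enat (bcs_tau C \<omega> - enat T) * indicator E \<omega> \<partial>L) / emeasure L E
            \<le> (of_nat u * emeasure L E) / emeasure L E"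
          using int_le unfolding int_eq by (rule divide_right_mono_ennreal)
        also note ratio
        also note fin
        finally show ?thesis .
      qed
      then show "let E = {\<omega>\<in>space (chlaw P th0 th1 (enat T)). \<forall>t. 1 \<le> t \<and> t < T \<longrightarrow> th0 \<in> C t \<omega>}
            in (\<integral>\<^sup>+ \<omega>. ennreal_of_enat (bcs_tau C \<omega> - enat T) * indicator E \<omega> \<partial>chlaw P th0 th1 (enat T))
                 / emeasure (chlaw P th0 th1 (enat T)) E
               \<le> 3 * ennreal_of_enat (u0 w \<alpha> th0 th1 T) / ennreal (1 - \<alpha>)"
        using goal by (simp only: Let_def E_def L_def)
    qed
  qed
qed

end
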